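(* Let $(X,\wedge,\vee,\bot,\top)$ be a bounded distributive lattice, let $n\ge 1$, and let $x=(x_1,\ldots,x_n)$ be a sequence of elements of $X$ such that $x_i\le x_n$ for all $1\le i\le n-1$. For $0\le m\le n$ and $0\le k\le m+1$ define $$P_m(k)=\begin{cases}\bot & k=0,\\ \bigwedge_{I\subseteq\{1,\ldots,m\},\ |I|=k}\ \bigvee_{i\in I} x_i & 1\le k\le m,\\ \top & k=m+1.\end{cases}$$ Then $P_n(n)=x_n$, and $P_n(i)=P_{n-1}(i)$ for all $1\le i\le n-1$.
   Context: $\le$ is the partial order of the lattice $X$; $\bot$ and $\top$ are its least and greatest elements. For $1\le k\le m$, $P_m(k)$ is the $k$-th element of $(x_1,\ldots,x_m)$ sorted with respect to the lattice. *)

theory Defs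
  imports Main
begin

text \<open>Values for k > m+1 are not used
  (we set them to top as well).\<close>

definition P :: "(nat \<Rightarrow> 'a::{distrib_lattice, bounded_lattice}) \<Rightarrow> nat \<Rightarrow> nat \<Rightarrow> 'a" where
  "P x m k =
     (if k = 0 then bot
      else if k \<le> m then Inf_fin {Sup_fin (x ` I) | I. I \<subseteq> {1..m} \<and> card I = k}
      else top)"

end

theory Submission
  imports Defs
begin

lemma finS: "finite {Sup_fin (x ` I) | I. I \<subseteq> {1..(m::nat)} \<and> card I = k}"
proof -
  have "{Sup_fin (x ` I) | I. I \<subseteq> {1..m} \<and> card I = k} \<subseteq> (\<lambda>I. Sup_fin (x ` I)) ` Pow {1..m}"
    by blast
  thus ?thesis by (rule finite_subset) simp
qed

lemma sup_le:
  fixes x :: "nat \<Rightarrow> 'a::{distrib_lattice, bounded_lattice}"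
  assumes "\<forall>i. 1 \<le> i \<and> i \<le> n - 1 \<longrightarrow> x i \<le> x n" "J \<subseteq> {1..n}" "J \<noteq> {}"
  shows "Sup_fin (x ` J) \<le> x n"
proof (rule Sup_fin.boundedI)
  show "finite (x ` J)" using assms(2) finite_subset by blast
  show "x ` J \<noteq> {}" using assms(3) by simp
  fix a assume "a \<in> x ` J"
  then obtain j where "j \<in> J" "a = x j" by blast
  thus "a \<le> x n" using assms(1,2) by (cases "j = n") force+
qed

lemma sup_eq:
  fixes x :: "nat \<Rightarrow> 'a::{distrib_lattice, bounded_lattice}"
  assumes "\<forall>i. 1 \<le> i \<and> i \<le> n - 1 \<longrightarrow> x i \<le> x n" "J \<subseteq> {1..n}" "n \<in> J"
  shows "Sup_fin (x ` J) = x n"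
proof (rule antisym)
  show "Sup_fin (x ` J) \<le> x n" using sup_le[OF assms(1,2)] assms(3) by blast
  show "x n \<le> Sup_fin (x ` J)"
    by (rule Sup_fin.coboundedI) (use assms(2,3) finite_subset in auto)
qed

theorem lemma3p3:
  fixes x :: "nat \<Rightarrow> 'a::{distrib_lattice, bounded_lattice}"
    and n :: nat
  assumes "n \<ge> 1"
    and "\<forall>i. 1 \<le> i \<and> i \<le> n - 1 \<longrightarrow> x i \<le> x n"
  shows "P x n n = x n \<and> (\<forall>i. 1 \<le> i \<and> i \<le> n - 1 \<longrightarrow> P x n i = P x (n - 1) i)"
proof
  have "{Sup_fin (x ` I) | I. I \<subseteq> {1..n} \<and> card I = n} = {Sup_fin (x ` {1..n})}"
  proof -
    have "I \<subseteq> {1..n} \<and> card I = n \<longleftrightarrow> I = {1..n}" for I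
      using card_subset_eq[of "{1..n}" I] by auto
    thus ?thesis by auto
  qed
  moreover have "Sup_fin (x ` {1..n}) = x n" using sup_eq[OF assms(2)] assms(1) by simp
  ultimately show "P x n n = x n" using assms(1) by (simp add: P_def)
next
  show "\<forall>i. 1 \<le> i \<and> i \<le> n - 1 \<longrightarrow> P x n i = P x (n - 1) i"
  proof (intro allI impI)
    fix i assume i: "1 \<le> i \<and> i \<le> n - 1"
    define S where "S = {Sup_fin (x ` I) | I. I \<subseteq> {1..n} \<and> card I = i}"
    define S' where "S' = {Sup_fin (x ` I) | I. I \<subseteq> {1..n-1} \<and> card I = i}"
    have fS: "finite S" "finite S'" unfolding S_def S'_def by (rule finS)+
    have sub: "{1..n-1} \<subseteq> {1..n}" by auto
    have S'S: "S' \<subseteq> S" unfolding S_def S'_def using sub by blast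
    have J0: "{1..i} \<subseteq> {1..n-1}" "card {1..i} = i" "{1..i} \<noteq> {}" using i by auto
    have s0: "Sup_fin (x ` {1..i}) \<in> S'" unfolding S'_def using J0 by blast
    have s0le: "Sup_fin (x ` {1..i}) \<le> x n"
      by (rule sup_le[OF assms(2)]) (use J0 sub in auto)
    have ne: "S' \<noteq> {}" using s0 by blast
    have "Inf_fin S = Inf_fin S'"
    proof (rule antisym)
      show "Inf_fin S \<le> Inf_fin S'"
        by (rule Inf_fin.boundedI[OF fS(2) ne]) (use S'S fS(1) Inf_fin.coboundedI in blast)
      show "Inf_fin S' \<le> Inf_fin S"
      proof (rule Inf_fin.boundedI[OF fS(1)])
        show "S \<noteq> {}" using S'S ne by blast
        fix a assume "a \<in> S"
        then obtain J where J: "J \<subseteq> {1..n}" "card J = i" "a = Sup_fin (x ` J)"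
          unfolding S_def by blast
        show "Inf_fin S' \<le> a"
        proof (cases "n \<in> J")
          case True
          hence "a = x n" using sup_eq[OF assms(2) J(1)] J(3) by simp
          moreover have "Inf_fin S' \<le> Sup_fin (x ` {1..i})"
            by (rule Inf_fin.coboundedI[OF fS(2) s0])
          ultimately show ?thesis using s0le by simp
        next
          case False
          have "J \<subseteq> {1..n-1}"
          proof
            fix j assume "j \<in> J"
            then have "j \<in> {1..n}" "j \<noteq> n" using J(1) False by auto
            thus "j \<in> {1..n-1}" by auto
          qed
          then have "a \<in> S'" unfolding S'_def using J by blast
          thus ?thesis by (rule Inf_fin.coboundedI[OF fS(2)])
        qed
      qed
    qed
    moreover have "i \<le> n" using i by linarith
    ultimately show "P x n i = P x (n - 1) i" using i unfolding P_def S_def S'_def by simp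
  qed
qed

end
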